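(* Let $\mathcal{H}>0$ be a constant such that $\|e^{-t\Delta^2}\varphi\|_{L^q}\leq\mathcal{H}t^{-\frac N4(\frac1p-\frac1q)}\|\varphi\|_{L^p}$ for all $1\leq p\leq q\leq\infty$, $t>0$, $\varphi\in L^p(\mathbb{R}^N)$, with $N=8$. Then for every $g\in L^1(\mathbb{R}^8)\cap L^4(\mathbb{R}^8)$, $$\|e^{-t\Delta^2}g\|_{L^\phi(\mathbb{R}^8)}\leq\zeta(t)\big(\|g\|_{L^1}+\|g\|_{L^4}\big)\quad\text{for all }t>0,$$ where $$\zeta(t)=\frac{\mathcal{H}}{\sqrt{\log2}}\min\Big\{1+t^{-1/2},\ t^{-2}\big(\log(t^{-2}+1)\big)^{-1/4}\Big\},$$ and $\zeta\in L^1(0,\infty)$.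
   Context: $e^{-t\Delta^2}$ denotes the biharmonic heat semigroup on $\mathbb{R}^8$: $e^{-t\Delta^2}\varphi=E_t\star\varphi$ with $E_t(x)=(2\pi)^{-8}\int e^{-t|\xi|^4}e^{ix\cdot\xi}\,d\xi$. Let $\phi(s)=e^{s^2}-1-s^2$. The Orlicz space $L^\phi(\mathbb{R}^8)$ is the set of $u\in L^1_{loc}(\mathbb{R}^8)$ such that $\int\phi(|u|/\alpha)\,dx<\infty$ for some $\alpha>0$, with Luxemburg norm $\|u\|_{L^\phi}=\inf\{\alpha>0:\int_{\mathbb{R}^8}\phi(|u(x)|/\alpha)\,dx\leq1\}$. *)

theory Defs
  imports "HOL-Analysis.Analysis" "HOL-Probability.Essential_Supremum"
begin

definition bihE :: "real \<Rightarrow> real^8 \<Rightarrow> complex" where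
  "bihE t x = complex_of_real (1 / (2 * pi) ^ 8) *
     (\<integral>\<xi>. complex_of_real (exp (- t * norm \<xi> ^ 4)) * cis (x \<bullet> \<xi>) \<partial>lborel)"

text \<open>Biharmonic heat semigroup: e^(-t Delta^2) phi = E_t convolved with phi.\<close>
definition bih_heat :: "real \<Rightarrow> (real^8 \<Rightarrow> real) \<Rightarrow> real^8 \<Rightarrow> complex" where
  "bih_heat t \<phi> x = (\<integral>y. bihE t (x - y) * complex_of_real (\<phi> y) \<partial>lborel)"

text \<open>L^p norm for p in [1, infinity] (as an extended real exponent), valued in ennreal
  (infinity when the function is not p-integrable).\<close>
definition Lp_norm :: "ereal \<Rightarrow> (real^8 \<Rightarrow> 'b::real_normed_vector) \<Rightarrow> ennreal" where
  "Lp_norm p f =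
     (if p = \<infinity> then e2ennreal (esssup lborel (\<lambda>x. ereal (norm (f x))))
      else (let I = (\<integral>\<^sup>+x. ennreal (norm (f x) powr real_of_ereal p) \<partial>lborel)
            in if I = \<infinity> then \<infinity> else ennreal (enn2real I powr (1 / real_of_ereal p))))"

definition memLp :: "ereal \<Rightarrow> (real^8 \<Rightarrow> 'b::real_normed_vector) \<Rightarrow> bool" where
  "memLp p f \<longleftrightarrow> f \<in> borel_measurable lborel \<and> Lp_norm p f < \<infinity>"

definition inv_exp :: "ereal \<Rightarrow> real" where
  "inv_exp p = (if p = \<infinity> then 0 else 1 / real_of_ereal p)"

definition phiO :: "real \<Rightarrow> real" where
  "phiO s = exp (s\<^sup>2) - 1 - s\<^sup>2"

text \<open>Luxemburg norm of the Orlicz space L^phi, valued in ennreal (Inf {} = infinity,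
  i.e. infinite norm for functions outside L^phi).\<close>
definition Orlicz_norm :: "(real^8 \<Rightarrow> 'b::real_normed_vector) \<Rightarrow> ennreal" where
  "Orlicz_norm u = Inf {ennreal \<alpha> | \<alpha>. \<alpha> > 0 \<and>
      (\<integral>\<^sup>+x. ennreal (phiO (norm (u x) / \<alpha>)) \<partial>lborel) \<le> 1}"

definition zeta :: "real \<Rightarrow> real \<Rightarrow> real" where
  "zeta H t = H / sqrt (ln 2) *
     min (1 + t powr (-1/2)) (t powr (-2) * (ln (t powr (-2) + 1)) powr (-1/4))"

end

theory Submission
  imports Defs
begin


lemma phiO_nonneg: "phiO s \<ge> 0"
  unfolding phiO_def using exp_ge_add_one_self[of "s\<^sup>2"] by linarith

lemma phiO_sums: "(\<lambda>n. (s\<^sup>2)^(n+2) / fact (n+2)) sums phiO s"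
proof -
  have "(\<lambda>n. (s\<^sup>2)^(n+2) /\<^sub>R fact (n+2)) sums (exp (s\<^sup>2) - (\<Sum>i<2. (s\<^sup>2)^i /\<^sub>R fact i))"
    using sums_split_initial_segment[OF exp_converges[of "s\<^sup>2"], of 2] by simp
  then show ?thesis unfolding phiO_def by (simp add: divide_inverse_commute numeral_2_eq_2 diff_diff_eq)
qed

lemma phiO_bound:
  assumes "0 \<le> s" "s \<le> y" "0 < y"
  shows "phiO s \<le> s^4 * (phiO y / y^4)"
proof -
  have "(\<lambda>n. s^4 / y^4 * ((y\<^sup>2)^(n+2) / fact (n+2))) sums (s^4/y^4 * phiO y)"
    by (rule sums_mult[OF phiO_sums])
  moreover have "(s\<^sup>2)^(n+2) / fact (n+2) \<le> s^4 / y^4 * ((y\<^sup>2)^(n+2) / fact (n+2))" for n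
  proof -
    have "s\<^sup>2 \<le> y\<^sup>2" using assms by (intro power_mono) auto
    then have "(s\<^sup>2)^n \<le> (y\<^sup>2)^n" by (rule power_mono) simp
    have e1: "(s\<^sup>2)^(n+2) = s^4 * (s\<^sup>2)^n"
    proof -
      have "(s\<^sup>2)^(n+2) = (s\<^sup>2)^n * (s\<^sup>2)^2" by (rule power_add)
      moreover have "(s\<^sup>2)^2 = s^4" by (simp flip: power_mult)
      ultimately show ?thesis by simp
    qed
    have e2: "s^4 / y^4 * (y\<^sup>2)^(n+2) = s^4 * (y\<^sup>2)^n"
    proof -
      have "(y\<^sup>2)^(n+2) = (y\<^sup>2)^n * (y\<^sup>2)^2" by (rule power_add)
      moreover have "(y\<^sup>2)^2 = y^4" by (simp flip: power_mult)
      ultimately show ?thesis using assms by simp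
    qed
    have "s^4 * (s\<^sup>2)^n \<le> s^4 * (y\<^sup>2)^n" using \<open>(s\<^sup>2)^n \<le> (y\<^sup>2)^n\<close>
      by (rule mult_left_mono) simp
    then have "(s\<^sup>2)^(n+2) \<le> s^4 / y^4 * (y\<^sup>2)^(n+2)" unfolding e1 e2 .
    then show ?thesis by (simp add: divide_right_mono)
  qed
  ultimately have "phiO s \<le> s^4/y^4 * phiO y"
    by (intro sums_le[OF _ phiO_sums[of s]]) auto
  then show ?thesis by simp
qed

lemma key_ineq:
  fixes w :: real assumes "w > 0"
  shows "exp (ln 2 * w) - 1 - ln 2 * w \<le> exp (w\<^sup>2) - 1"
proof (cases "w \<ge> ln 2")
  case True
  then have "ln 2 * w \<le> w\<^sup>2" using assms by (simp add: power2_eq_square mult_right_mono)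
  then have "exp (ln 2 * w) \<le> exp (w\<^sup>2)" by simp
  moreover have "ln 2 * w \<ge> 0" using assms by simp
  ultimately show ?thesis by linarith
next
  case False
  have l2: "ln (2::real) < 1" "ln (2::real) > 0" using ln_2_less_1 by auto
  let ?x = "ln 2 * w"
  have "?x \<ge> 0" using assms l2 by simp
  have "?x \<le> 1" using False assms l2 by (intro mult_le_one) auto
  then have "exp ?x \<le> 1 + ?x + ?x\<^sup>2" using \<open>?x \<ge> 0\<close> by (intro exp_bound)
  moreover have "?x\<^sup>2 \<le> w\<^sup>2"
  proof -
    have "(ln (2::real))\<^sup>2 \<le> 1" using l2 by (intro power_le_one) auto
    then have "(ln (2::real))\<^sup>2 * w\<^sup>2 \<le> 1 * w\<^sup>2" by (rule mult_right_mono) simp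
    then show ?thesis by (simp add: power_mult_distrib)
  qed
  moreover have "w\<^sup>2 \<le> exp (w\<^sup>2) - 1" using exp_ge_add_one_self[of "w\<^sup>2"] by linarith
  ultimately show ?thesis by simp
qed



lemma zeta_meas: "zeta H \<in> borel_measurable lborel"
  unfolding zeta_def by measurable

lemma absint_to_lborel:
  fixes f :: "real \<Rightarrow> real"
  assumes "f absolutely_integrable_on A" "A \<in> sets lborel" "f \<in> borel_measurable lborel"
  shows "set_integrable lborel A f"
  using assms unfolding set_integrable_def
  by (subst integrable_completion[symmetric]) auto

lemma int_powr0: "set_integrable lborel {0<..1::real} (\<lambda>x. x powr (-1/2))"
proof (rule absint_to_lborel)
  show "(\<lambda>x::real. x powr (-1/2)) absolutely_integrable_on {0<..1}"
    by (rule nonnegative_absolutely_integrable_1) (auto intro: integrable_on_powr_from_0')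
qed auto

lemma int_powr1: "set_integrable lborel {(1::real)..} (\<lambda>x. x powr (-3/2))"
proof (rule absint_to_lborel)
  have "(\<lambda>x::real. x powr (-3/2)) integrable_on {1..}"
    using has_integral_powr_to_inf[of "-3/2" 1] by (auto simp: integrable_on_def)
  then show "(\<lambda>x::real. x powr (-3/2)) absolutely_integrable_on {1..}"
    by (rule nonnegative_absolutely_integrable_1) auto
qed auto

lemma ln_lower: fixes x :: real assumes "0 \<le> x" "x \<le> 1" shows "x/2 \<le> ln (1 + x)"
proof -
  have "exp (x/2) \<le> 1 + x/2 + (x/2)\<^sup>2" using assms by (intro exp_bound) auto
  also have "\<dots> \<le> 1 + x"
  proof -
    have "(x/2)*(x/2) \<le> x/2" using assms by (intro mult_right_le_one_le) auto
    then show ?thesis by (simp add: power2_eq_square)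
  qed
  finally have "exp (x/2) \<le> 1 + x" .
  then show ?thesis using assms by (subst ln_ge_iff) auto
qed

lemma zeta_nonneg: assumes "H > 0" "t > 0" shows "zeta H t \<ge> 0"
proof -
  have "ln (t powr (-2) + 1) > 0" using assms by (simp add: ln_gt_zero)
  then show ?thesis using assms unfolding zeta_def by auto
qed

lemma zeta_le0: assumes "H > 0" "0 < t" "t \<le> 1"
  shows "zeta H t \<le> (2 * H / sqrt (ln 2)) * t powr (-1/2)"
proof -
  have "t powr (-1/2) \<ge> 1" using assms
  proof -
    have "t powr (1/2) \<le> 1" "t powr (1/2) > 0" using assms by (auto intro: powr_le1)
    then show ?thesis by (simp add: powr_minus one_le_inverse)
  qed
  then have "min (1 + t powr (-1/2)) (t powr (-2) * (ln (t powr (-2) + 1)) powr (-1/4)) \<le> 2 * t powr (-1/2)"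
    by linarith
  then have "H / sqrt (ln 2) * min (1 + t powr (-1/2)) (t powr (-2) * (ln (t powr (-2) + 1)) powr (-1/4))
     \<le> H / sqrt (ln 2) * (2 * t powr (-1/2))"
    by (rule mult_left_mono) (use assms in simp)
  also have "H / sqrt (ln 2) * (2 * t powr (-1/2)) = (2 * H / sqrt (ln 2)) * t powr (-1/2)" by simp
  finally show ?thesis unfolding zeta_def .
qed

lemma zeta_le1: assumes "H > 0" "1 \<le> t"
  shows "zeta H t \<le> (2 * H / sqrt (ln 2)) * t powr (-3/2)"
proof -
  define x where "x = t powr (-2)"
  have t0: "t > 0" using assms by simp
  have x0: "0 < x" "x \<le> 1" using assms ge_one_powr_ge_zero[of t 2] unfolding x_def by (auto simp: powr_minus inverse_le_1_iff)
  have "ln (x + 1) \<ge> x/2" using ln_lower[of x] x0 by (simp add: add.commute)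
  then have "ln (x+1) powr (-1/4) \<le> (x/2) powr (-1/4)" using x0
    by (intro powr_mono2') auto
  also have "(x/2) powr (-1/4) = x powr (-1/4) / 2 powr (-1/4)" by (rule powr_divide)
  also have "x powr (-1/4) = t powr (1/2)" unfolding x_def powr_powr by simp
  also have "1 / (2::real) powr (-1/4) = 2 powr (1/4)" by (simp add: powr_minus_divide)
  then have "t powr (1/2) / (2::real) powr (-1/4) = t powr (1/2) * 2 powr (1/4)"
    by (metis times_divide_eq_right mult.right_neutral)
  also have "(2::real) powr (1/4) \<le> 2" using powr_mono[of "1/4" 1 "2::real"] by simp
  then have "t powr (1/2) * 2 powr (1/4) \<le> t powr (1/2) * 2" by (intro mult_left_mono) auto
  finally have A: "ln (x+1) powr (-1/4) \<le> t powr (1/2) * 2" .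
  have "x * (ln (x + 1)) powr (-1/4) \<le> x * (t powr (1/2) * 2)"
    using mult_left_mono[OF A] x0 by simp
  also have "x * (t powr (1/2) * 2) = 2 * (t powr (-2) * t powr (1/2))" unfolding x_def by simp
  also have "t powr (-2) * t powr (1/2) = t powr (-3/2)" by (simp add: powr_add[symmetric])
  finally have m1: "x * (ln (x + 1)) powr (-1/4) \<le> 2 * t powr (-3/2)" .
  have "min (1 + t powr (-1/2)) (x * (ln (x + 1)) powr (-1/4)) \<le> 2 * t powr (-3/2)"
    using m1 by (rule min.coboundedI2)
  then have "H / sqrt (ln 2) * min (1 + t powr (-1/2)) (x * (ln (x + 1)) powr (-1/4))
     \<le> H / sqrt (ln 2) * (2 * t powr (-3/2))"
    by (rule mult_left_mono) (use assms in simp)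
  also have "H / sqrt (ln 2) * (2 * t powr (-3/2)) = (2 * H / sqrt (ln 2)) * t powr (-3/2)" by simp
  finally show ?thesis unfolding zeta_def x_def .
qed

lemma zeta_int: assumes "H > 0" shows "set_integrable lborel {0<..} (zeta H)"
proof -
  have "set_integrable lborel {0<..1} (zeta H)"
  proof -
  have "set_integrable lborel {0<..1} (\<lambda>x. 2 * H / sqrt (ln 2) * x powr (-1/2))"
    using int_powr0 by simp
  then show "set_integrable lborel {0<..1} (zeta H)"
  proof (rule set_integrable_bound)
    show "set_borel_measurable lborel {0<..1} (zeta H)"
      unfolding set_borel_measurable_def using zeta_meas by measurable
    show "AE x in lborel. x \<in> {0<..1} \<longrightarrow> norm (zeta H x) \<le> norm (2 * H / sqrt (ln 2) * x powr (- 1 / 2))"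
      using assms zeta_le0 zeta_nonneg by (auto intro!: AE_I2)
  qed
  qed
  moreover have "set_integrable lborel {1..} (zeta H)"
  proof -
  have "set_integrable lborel {1..} (\<lambda>x. 2 * H / sqrt (ln 2) * x powr (-3/2))"
    using int_powr1 by simp
  then show "set_integrable lborel {1..} (zeta H)"
  proof (rule set_integrable_bound)
    show "set_borel_measurable lborel {1..} (zeta H)"
      unfolding set_borel_measurable_def using zeta_meas by measurable
    show "AE x in lborel. x \<in> {1..} \<longrightarrow> norm (zeta H x) \<le> norm (2 * H / sqrt (ln 2) * x powr (- 3 / 2))"
      using assms zeta_le1 zeta_nonneg by (auto intro!: AE_I2)
  qed
  qed
  ultimately have "set_integrable lborel ({0<..1} \<union> {1..}) (zeta H)"
    by (rule set_integrable_Un) auto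
  moreover have "{0<..1} \<union> {1..} = {(0::real)<..}" by auto
  ultimately show ?thesis by simp
qed



lemma Linf_bound:
  fixes u :: "real^8 \<Rightarrow> 'b::real_normed_vector"
  assumes "Lp_norm \<infinity> u \<le> ennreal K" "K \<ge> 0"
  shows "(\<lambda>x. norm (u x)) \<in> borel_measurable lborel" "AE x in lborel. norm (u x) \<le> K"
proof -
  let ?f = "\<lambda>x. ereal (norm (u x))"
  have E: "e2ennreal (esssup lborel ?f) \<le> ennreal K" using assms(1) by (simp add: Lp_norm_def)
  have m: "?f \<in> borel_measurable lborel"
  proof (rule ccontr)
    assume "?f \<notin> borel_measurable lborel"
    then have "esssup lborel ?f = top" by (rule esssup_non_measurable)
    then show False using E by (simp add: top_ereal_def top_unique)
  qed
  then show "(\<lambda>x. norm (u x)) \<in> borel_measurable lborel" by simp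
  have e: "esssup lborel ?f \<le> ereal K"
  proof (cases "esssup lborel ?f \<ge> 0")
    case True
    have "enn2ereal (e2ennreal (esssup lborel ?f)) \<le> enn2ereal (ennreal K)"
      using E by (simp add: less_eq_ennreal.rep_eq)
    then show ?thesis using True assms(2) by (simp add: enn2ereal_e2ennreal)
  next
    case False
    then show ?thesis using assms(2) by (meson ereal_less_eq(5) linear order_trans zero_ereal_def)
  qed
  show "AE x in lborel. norm (u x) \<le> K"
    using esssup_AE[where M=lborel and f="?f"]
  proof (rule eventually_mono)
    fix x assume "ereal (norm (u x)) \<le> esssup lborel ?f"
    then have "ereal (norm (u x)) \<le> ereal K" using e by (rule order_trans)
    then show "norm (u x) \<le> K" by simp
  qed
qed

lemma L4_bound:
  fixes u :: "real^8 \<Rightarrow> 'b::real_normed_vector"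
  assumes "Lp_norm 4 u \<le> ennreal K" "K \<ge> 0"
  shows "(\<integral>\<^sup>+x. ennreal (norm (u x) ^ 4) \<partial>lborel) \<le> ennreal (K^4)"
proof -
  define I where "I = (\<integral>\<^sup>+x. ennreal (norm (u x) ^ 4) \<partial>lborel)"
  have LP: "Lp_norm 4 u = (if I = \<infinity> then \<infinity> else ennreal (enn2real I powr (1/4)))"
    unfolding Lp_norm_def I_def Let_def by simp
  have "I \<noteq> \<infinity>" using assms LP by (auto split: if_splits simp: top_unique)
  then have a: "enn2real I powr (1/4) \<le> K" using assms LP by simp
  have "(enn2real I powr (1/4))^4 \<le> K^4" by (rule power_mono[OF a]) auto
  moreover have "(enn2real I powr (1/4))^4 = enn2real I"
  proof (cases "enn2real I = 0")
    case False
    then show ?thesis by (simp add: powr_power)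
  qed simp
  ultimately have "enn2real I \<le> K^4" by simp
  then show ?thesis using \<open>I \<noteq> \<infinity>\<close> unfolding I_def[symmetric]
    by (metis ennreal_enn2real ennreal_leI infinity_ennreal_def top.not_eq_extremum)
qed

lemma orlicz_step:
  fixes u :: "real^8 \<Rightarrow> 'b::real_normed_vector"
  assumes meas: "(\<lambda>x. norm (u x)) \<in> borel_measurable lborel"
    and ae: "AE x in lborel. norm (u x) \<le> B" and B: "B > 0" and a: "\<alpha> > 0"
    and I4: "(\<integral>\<^sup>+x. ennreal (norm (u x) ^ 4) \<partial>lborel) \<le> ennreal Q"
    and Q: "Q \<ge> 0"
    and le: "phiO (B/\<alpha>) * (Q / B^4) \<le> 1"
  shows "Orlicz_norm u \<le> ennreal \<alpha>"
proof -
  define c where "c = phiO (B/\<alpha>) / B^4"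
  have c0: "c \<ge> 0" unfolding c_def using phiO_nonneg B by simp
  have "AE x in lborel. ennreal (phiO (norm (u x) / \<alpha>)) \<le> ennreal c * ennreal (norm (u x)^4)"
    using ae
  proof (rule eventually_mono)
    fix x assume x: "norm (u x) \<le> B"
    have "phiO (norm (u x) / \<alpha>) \<le> (norm (u x) / \<alpha>)^4 * (phiO (B/\<alpha>) / (B/\<alpha>)^4)"
      using x a B by (intro phiO_bound) (auto simp: divide_right_mono)
    also have "\<dots> = c * norm (u x)^4" unfolding c_def using a B by (simp add: field_simps)
    finally show "ennreal (phiO (norm (u x) / \<alpha>)) \<le> ennreal c * ennreal (norm (u x)^4)"
      using c0 by (simp add: ennreal_mult[symmetric])
  qed
  then have "(\<integral>\<^sup>+x. ennreal (phiO (norm (u x) / \<alpha>)) \<partial>lborel) \<le> (\<integral>\<^sup>+x. ennreal c * ennreal (norm (u x)^4) \<partial>lborel)"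
    by (rule nn_integral_mono_AE)
  also have "\<dots> = ennreal c * (\<integral>\<^sup>+x. ennreal (norm (u x)^4) \<partial>lborel)"
  proof (rule nn_integral_cmult)
    have "(\<lambda>r::real. ennreal (r^4)) \<in> borel_measurable borel" by measurable
    from measurable_compose[OF meas this]
    show "(\<lambda>x. ennreal (norm (u x)^4)) \<in> borel_measurable lborel" by (simp add: comp_def)
  qed
  also have "\<dots> \<le> ennreal c * ennreal Q" using I4 by (rule mult_left_mono) auto
  also have "\<dots> = ennreal (c * Q)" using c0 Q by (simp add: ennreal_mult)
  also have "\<dots> \<le> 1" using le unfolding c_def by (simp add: field_simps)
  finally have "(\<integral>\<^sup>+x. ennreal (phiO (norm (u x) / \<alpha>)) \<partial>lborel) \<le> 1" .
  then show ?thesis unfolding Orlicz_norm_def using a by (intro Inf_lower) auto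
qed

lemma orlicz_zero:
  fixes u :: "real^8 \<Rightarrow> 'b::real_normed_vector"
  assumes ae: "AE x in lborel. norm (u x) \<le> 0"
  shows "Orlicz_norm u \<le> 0"
proof (rule ennreal_le_epsilon)
  fix e :: real assume e: "0 < e"
  have "AE x in lborel. ennreal (phiO (norm (u x) / e)) \<le> 0"
    using ae by (rule eventually_mono) (simp add: phiO_def)
  from nn_integral_mono_AE[OF this] have "(\<integral>\<^sup>+x. ennreal (phiO (norm (u x) / e)) \<partial>lborel) \<le> 1"
    by simp
  then have "Orlicz_norm u \<le> ennreal e" unfolding Orlicz_norm_def using e by (intro Inf_lower) auto
  then show "Orlicz_norm u \<le> 0 + ennreal e" by simp
qed



lemma inv_exp_simps: "inv_exp 1 = 1" "inv_exp 4 = 1/4" "inv_exp (ereal 4) = 1/4" "inv_exp \<infinity> = 0"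
  by (auto simp: inv_exp_def)

theorem corollary3p6:
  fixes H :: real
  assumes Hpos: "H > 0"
    and smoothing: "\<And>p q t \<phi>. 1 \<le> p \<Longrightarrow> p \<le> q \<Longrightarrow> t > 0 \<Longrightarrow> memLp p (\<phi> :: real^8 \<Rightarrow> real) \<Longrightarrow>
        Lp_norm q (bih_heat t \<phi>)
          \<le> ennreal (H * t powr (- (8 / 4) * (inv_exp p - inv_exp q))) * Lp_norm p \<phi>"
  shows "(\<forall>g :: real^8 \<Rightarrow> real. memLp 1 g \<and> memLp 4 g \<longrightarrow>
           (\<forall>t > 0. Orlicz_norm (bih_heat t g)
                     \<le> ennreal (zeta H t * (enn2real (Lp_norm 1 g) + enn2real (Lp_norm 4 g)))))
         \<and> set_integrable lborel {0<..} (zeta H)"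
proof (intro conjI allI impI)
  show "set_integrable lborel {0<..} (zeta H)" using zeta_int[OF Hpos] .
next
  fix g :: "real^8 \<Rightarrow> real" and t :: real
  assume g: "memLp 1 g \<and> memLp 4 g" and t: "t > 0"
  define u where "u = bih_heat t g"
  define G1 where "G1 = enn2real (Lp_norm 1 g)"
  define G4 where "G4 = enn2real (Lp_norm 4 g)"
  define M where "M = G1 + G4"
  have G0: "G1 \<ge> 0" "G4 \<ge> 0" unfolding G1_def G4_def by auto
  have L1: "Lp_norm 1 g = ennreal G1" using g unfolding G1_def memLp_def by simp
  have L4: "Lp_norm 4 g = ennreal G4" using g unfolding G4_def memLp_def by simp
  define s where "s = t powr (-1/2)"
  have s0: "s > 0" unfolding s_def using t by simp
  have s3: "t powr (-3/2) = s^3" unfolding s_def using t by (simp add: powr_power)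
  have s4: "t powr (-2) = s^4" unfolding s_def using t by (simp add: powr_power)
  have S: "Lp_norm q u \<le> ennreal (H * t powr (- (8 / 4) * (inv_exp p - inv_exp q)) * G)"
    if "1 \<le> p" "p \<le> q" "memLp p g" "Lp_norm p g = ennreal G" "G \<ge> 0" for p q G
  proof -
    have "Lp_norm q u \<le> ennreal (H * t powr (- (8 / 4) * (inv_exp p - inv_exp q))) * Lp_norm p g"
      unfolding u_def using that t by (intro smoothing) auto
    also have "\<dots> = ennreal (H * t powr (- (8 / 4) * (inv_exp p - inv_exp q)) * G)"
      using that Hpos by (simp add: ennreal_mult)
    finally show ?thesis .
  qed
  have a1: "Lp_norm \<infinity> u \<le> ennreal (H * s * G4)"
    using S[of 4 \<infinity> G4] g L4 G0 by (simp add: inv_exp_simps s_def)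
  have a2: "Lp_norm 4 u \<le> ennreal (H * G4)"
    using S[of 4 4 G4] g L4 G0 t by (simp add: inv_exp_simps)
  have a3: "Lp_norm \<infinity> u \<le> ennreal (H * s^4 * G1)"
    using S[of 1 \<infinity> G1] g L1 G0 by (simp add: inv_exp_simps s4[symmetric])
  have a4: "Lp_norm 4 u \<le> ennreal (H * s^3 * G1)"
    using S[of 1 4 G1] g L1 G0 by (simp add: inv_exp_simps s3[symmetric])
  have meas: "(\<lambda>x. norm (u x)) \<in> borel_measurable lborel"
    and ae1: "AE x in lborel. norm (u x) \<le> H * s * G4"
    using Linf_bound[OF a1] Hpos s0 G0 by auto
  have ae3: "AE x in lborel. norm (u x) \<le> H * s^4 * G1"
    using Linf_bound[OF a3] Hpos s0 G0 by auto
  have i2: "(\<integral>\<^sup>+x. ennreal (norm (u x) ^ 4) \<partial>lborel) \<le> ennreal ((H * G4)^4)"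
    using L4_bound[OF a2] Hpos G0 by auto
  have i4: "(\<integral>\<^sup>+x. ennreal (norm (u x) ^ 4) \<partial>lborel) \<le> ennreal ((H * s^3 * G1)^4)"
    using L4_bound[OF a4] Hpos G0 s0 by auto
  have l2: "ln (2::real) > 0" "ln (2::real) < 1" using ln_2_less_1 by auto
  have main: "Orlicz_norm u \<le> ennreal (zeta H t * M)"
  proof (cases "M = 0")
    case True
    then have "G4 = 0" using G0 unfolding M_def by simp
    then have "Orlicz_norm u \<le> 0" using ae1 by (intro orlicz_zero) simp
    then show ?thesis by (rule order_trans) simp
  next
    case False
    then have M0: "M > 0" using G0 unfolding M_def by simp
    define A where "A = 1 + s"
    define L where "L = ln (s^4 + 1)"
    have L0: "L > 0" unfolding L_def using s0 by (simp add: ln_gt_zero)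
    define lam where "lam = L powr (1/4)"
    have lam0: "lam > 0" unfolding lam_def using L0 by simp
    have "lam^4 = L powr (real 4 * (1/4))" unfolding lam_def using L0 by (intro powr_power) simp
    then have lam4: "lam^4 = L" using L0 by simp
    have Lm: "L powr (-1/4) = 1 / lam"
    proof -
      have "L powr (-1/4) = inverse (L powr (1/4))" using powr_minus[of L "1/4"] by simp
      then show ?thesis unfolding lam_def by (simp add: inverse_eq_divide)
    qed
    define \<alpha>A where "\<alpha>A = H * A * M / sqrt (ln 2)"
    define \<alpha>B where "\<alpha>B = H * s^4 * (1/lam) * M / sqrt (ln 2)"
    have zeq: "zeta H t = H / sqrt (ln 2) * min A (s^4 * (1/lam))"
      unfolding zeta_def A_def s4 L_def[symmetric] Lm[symmetric] by (simp add: s_def)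
    have z: "zeta H t * M = \<alpha>A \<or> zeta H t * M = \<alpha>B"
    proof (cases "A \<le> s^4 * (1/lam)")
      case True
      then have "zeta H t = H / sqrt (ln 2) * A" unfolding zeq by simp
      then show ?thesis unfolding \<alpha>A_def by simp
    next
      case False
      then have "zeta H t = H / sqrt (ln 2) * (s^4 * (1/lam))" unfolding zeq by simp
      then show ?thesis unfolding \<alpha>B_def by simp
    qed
    have OA: "Orlicz_norm u \<le> ennreal \<alpha>A"
    proof (rule orlicz_step[where B = "H * A * M", OF meas _ _ _ i2])
      show "AE x in lborel. norm (u x) \<le> H * A * M" using ae1
      proof (rule eventually_mono)
        fix x assume "norm (u x) \<le> H * s * G4"
        moreover have "H * s * G4 \<le> H * A * M"
          unfolding A_def M_def using Hpos s0 G0 by (intro mult_mono) auto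
        ultimately show "norm (u x) \<le> H * A * M" by linarith
      qed
      show "0 < H * A * M" using Hpos s0 M0 unfolding A_def by simp
      show "0 < \<alpha>A" using Hpos s0 M0 l2 unfolding A_def \<alpha>A_def by simp
      show "0 \<le> (H * G4)^4" using Hpos G0 by simp
      have "H * A * M / \<alpha>A = sqrt (ln 2)" using Hpos s0 M0 l2 unfolding A_def \<alpha>A_def by simp
      then have p: "phiO (H * A * M / \<alpha>A) = 1 - ln 2" unfolding phiO_def using l2 by simp
      have "(H * G4)^4 \<le> (H * A * M)^4"
        unfolding A_def M_def using Hpos s0 G0 by (intro power_mono mult_mono) auto
      then have "(H * G4)^4 / (H * A * M)^4 \<le> 1" using Hpos s0 M0 unfolding A_def by simp
      moreover have "(H * G4)^4 / (H * A * M)^4 \<ge> 0" using Hpos G0 M0 s0 unfolding A_def by simp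
      ultimately show "phiO (H * A * M / \<alpha>A) * ((H * G4)^4 / (H * A * M)^4) \<le> 1"
        unfolding p using l2 by (intro mult_le_one) auto
    qed
    have OB: "Orlicz_norm u \<le> ennreal \<alpha>B"
    proof (rule orlicz_step[where B = "H * s^4 * M", OF meas _ _ _ i4])
      let ?B = "H * s^4 * M"
      show "AE x in lborel. norm (u x) \<le> ?B" using ae3
      proof (rule eventually_mono)
        fix x assume "norm (u x) \<le> H * s^4 * G1"
        moreover have "H * s^4 * G1 \<le> ?B"
          unfolding M_def using Hpos s0 G0 by (intro mult_mono) auto
        ultimately show "norm (u x) \<le> ?B" by linarith
      qed
      show "0 < ?B" using Hpos s0 M0 by simp
      show "0 < \<alpha>B" using Hpos s0 M0 l2 lam0 unfolding \<alpha>B_def by simp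
      show "0 \<le> (H * s^3 * G1)^4" using Hpos G0 s0 by simp
      have y: "?B / \<alpha>B = sqrt (ln 2) * lam" using Hpos s0 M0 l2 lam0 unfolding \<alpha>B_def by (simp add: field_simps)
      have "phiO (?B / \<alpha>B) = exp (ln 2 * lam\<^sup>2) - 1 - ln 2 * lam\<^sup>2"
        unfolding y phiO_def using l2 by (simp add: power_mult_distrib)
      also have "\<dots> \<le> exp ((lam\<^sup>2)\<^sup>2) - 1" using lam0 by (intro key_ineq) simp
      also have "(lam\<^sup>2)\<^sup>2 = L" using lam4 by (simp flip: power_mult)
      also have "exp L - 1 = s^4" unfolding L_def using s0 by (simp add: add_pos_nonneg)
      finally have p: "phiO (?B / \<alpha>B) \<le> s^4" .
      have "(H * s^3 * G1)^4 \<le> (H * s^3 * M)^4"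
        unfolding M_def using Hpos s0 G0 by (intro power_mono mult_mono) auto
      then have q: "(H * s^3 * G1)^4 / ?B^4 \<le> (H * s^3 * M)^4 / ?B^4"
        by (simp add: divide_right_mono)
      have q2: "(H * s^3 * M)^4 / ?B^4 = 1 / s^4" using Hpos s0 M0 by (simp add: field_simps)
      have q0: "(H * s^3 * G1)^4 / ?B^4 \<ge> 0" using Hpos G0 by simp
      have "phiO (?B / \<alpha>B) * ((H * s^3 * G1)^4 / ?B^4) \<le> s^4 * (1 / s^4)"
        using mult_mono[OF p q[unfolded q2]] q0 s0 by simp
      then show "phiO (?B / \<alpha>B) * ((H * s^3 * G1)^4 / ?B^4) \<le> 1" using s0 by simp
    qed
    show ?thesis using z OA OB by auto
  qed
  then show "Orlicz_norm (bih_heat t g) \<le> ennreal (zeta H t * (enn2real (Lp_norm 1 g) + enn2real (Lp_norm 4 g)))"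
    unfolding u_def M_def G1_def G4_def .
qed

end
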